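(* Fix an integer $N\ge2$. For $H\in[0,1)$ define $$F^1_H(N)=\sum_{k=2}^N\left((k+1)^{2H}+(k-1)^{2H}-2k^{2H}\right)^2+\left(2^{2H}-2\right)^2,$$ $$F^2_H(N)=\sum_{k=2}^N(N-k+1)\left|(k+1)^{2H}+(k-1)^{2H}-2k^{2H}\right|+N\left|2^{2H}-2\right|,$$ and $E^i_H(N)=-\frac{(H-1/2)^2}{1-H}F^i_H(N)$, $i=1,2$. Then both $E^1_H(N)$ and $E^2_H(N)$ increase in $H$ on $[0,\frac12]$, vanish at $H=\frac12$, and decrease in $H$ on $[\frac12,1)$. More precisely, $E^1_H(N)$ increases from $-\frac14$ (at $H=0$) to $0$ and then decreases from $0$ to $-\infty$ (as $H\uparrow1$), and $E^2_H(N)$ increases from $-\frac N4$ (at $H=0$) to $0$ and then decreases from $0$ to $-\infty$ (as $H\uparrow1$).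
   Context: These are "alternative entropy functionals" of fractional Gaussian noise: $(k+1)^{2H}+(k-1)^{2H}-2k^{2H}=2\rho_k(H)$, where $\rho_k(H)$ is the lag-$k$ autocovariance of fractional Gaussian noise with Hurst index $H$; $F^1$ is the sum $\sum_{k=1}^N(2\rho_k(H))^2$ and $F^2$ is $\sum_{k=1}^N(N-k+1)|2\rho_k(H)|$. In the formulas, $(k-1)^{2H}$ for $k\ge2$ and $H=0$ equals $1$. *)

theory Defs
  imports "HOL-Analysis.Analysis"
begin

text \<open>The second difference (k+1)^(2H) + (k-1)^(2H) - 2 k^(2H), for k \<ge> 2
  (all bases are \<ge> 1, so powr agrees with the usual power, including H = 0).\<close>
definition d2 :: "nat \<Rightarrow> real \<Rightarrow> real" where
  "d2 k H = (real k + 1) powr (2*H) + (real k - 1) powr (2*H) - 2 * (real k) powr (2*H)"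

definition F1 :: "nat \<Rightarrow> real \<Rightarrow> real" where
  "F1 N H = (\<Sum>k=2..N. (d2 k H)^2) + (2 powr (2*H) - 2)^2"

definition F2 :: "nat \<Rightarrow> real \<Rightarrow> real" where
  "F2 N H = (\<Sum>k=2..N. real (N - k + 1) * \<bar>d2 k H\<bar>) + real N * \<bar>2 powr (2*H) - 2\<bar>"

definition E1 :: "nat \<Rightarrow> real \<Rightarrow> real" where
  "E1 N H = - ((H - 1/2)^2 / (1 - H)) * F1 N H"

definition E2 :: "nat \<Rightarrow> real \<Rightarrow> real" where
  "E2 N H = - ((H - 1/2)^2 / (1 - H)) * F2 N H"

end

theory Submission
  imports Defs "HOL-Real_Asymp.Real_Asymp"
begin

lemma second_diff_nonneg:
  fixes f f' f'' :: "real \<Rightarrow> real" and k :: real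
  assumes d1: "\<And>y. k-1 \<le> y \<Longrightarrow> y \<le> k+1 \<Longrightarrow> (f has_real_derivative f' y) (at y)"
      and d2: "\<And>y. k-1 \<le> y \<Longrightarrow> y \<le> k+1 \<Longrightarrow> (f' has_real_derivative f'' y) (at y)"
      and nn: "\<And>y. k-1 \<le> y \<Longrightarrow> y \<le> k+1 \<Longrightarrow> f'' y \<ge> 0"
  shows "f (k+1) + f (k-1) - 2 * f k \<ge> 0"
proof -
  obtain z1 where z1: "k < z1" "z1 < k+1" "f (k+1) - f k = (k+1-k) * f' z1"
    using MVT2[of k "k+1" f f'] d1 by force
  obtain z2 where z2: "k-1 < z2" "z2 < k" "f k - f (k-1) = (k-(k-1)) * f' z2"
    using MVT2[of "k-1" k f f'] d1 by force
  have "f' z2 \<le> f' z1"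
    by (rule DERIV_nonneg_imp_nondecreasing[of z2 z1 f']) (use z1 z2 d2 nn in force)+
  then show ?thesis using z1 z2 by simp
qed

lemma ln_le_half: assumes "(y::real) > 0" shows "ln y \<le> y / 2"
proof -
  have s: "sqrt y > 0" using assms by simp
  have "ln y = 2 * ln (sqrt y)" using assms by (simp add: ln_sqrt)
  also have "\<dots> \<le> 2 * (sqrt y - 1)" using ln_le_minus_one[OF s] by simp
  also have "\<dots> \<le> y / 2"
  proof -
    have "(sqrt y - 2)^2 \<ge> 0" by simp
    moreover have "(sqrt y)^2 = y" using assms by simp
    ultimately show ?thesis by (simp add: power2_eq_square algebra_simps)
  qed
  finally show ?thesis .
qed

lemma two_powr_le: assumes "0 \<le> (a::real)" "a \<le> 1" shows "2 powr a \<le> 1 + a"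
proof -
  have "convex_on UNIV (\<lambda>x::real. 2 powr x)"
    by (intro convex_on_realI[where f'="\<lambda>x. ln 2 * 2 powr x"])
       (auto intro!: derivative_eq_intros simp: mono_def)
  from convex_onD[OF this, of a 0 1] assms show ?thesis by simp
qed


definition dd :: "nat \<Rightarrow> real \<Rightarrow> real" where
  "dd k a = (real k + 1) powr a + (real k - 1) powr a - 2 * (real k) powr a"

definition ddp :: "nat \<Rightarrow> real \<Rightarrow> real" where
  "ddp k a = (real k + 1) powr a * ln (real k + 1) + (real k - 1) powr a * ln (real k - 1)
     - 2 * ((real k) powr a * ln (real k))"

definition KK :: "real \<Rightarrow> real" where
  "KK a = max 0 (1 - 2*a) + a*(1-a)/2"

lemma dd_le0: assumes "k \<ge> 2" "0 \<le> a" "a \<le> 1" shows "dd k a \<le> 0"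
proof -
  have "(\<lambda>y. - (y powr a)) (real k + 1) + (\<lambda>y. - (y powr a)) (real k - 1) - 2 * (\<lambda>y. - (y powr a)) (real k) \<ge> 0"
  proof (rule second_diff_nonneg[where f' = "\<lambda>y. - (a * y powr (a-1))" and f'' = "\<lambda>y. - (a * ((a-1) * y powr (a-1-1)))"])
    fix y assume y: "real k - 1 \<le> y" "y \<le> real k + 1"
    then have yp: "y > 0" using assms by linarith
    show "((\<lambda>y. - (y powr a)) has_real_derivative - (a * y powr (a-1))) (at y)"
      using yp by (intro derivative_intros has_real_derivative_powr)
    show "((\<lambda>y. - (a * y powr (a-1))) has_real_derivative - (a * ((a-1) * y powr (a-1-1)))) (at y)"
      using DERIV_minus[OF DERIV_cmult[OF has_real_derivative_powr[OF yp, of "a-1"], of a]] by simp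
    show "0 \<le> - (a * ((a-1) * y powr (a-1-1)))"
      using assms by (simp add: mult_nonneg_nonpos mult_nonpos_nonneg)
  qed
  then show ?thesis by (simp add: dd_def)
qed

lemma dd_ge0: assumes "k \<ge> 2" "1 \<le> a" shows "dd k a \<ge> 0"
proof -
  have "(\<lambda>y. (y powr a)) (real k + 1) + (\<lambda>y. (y powr a)) (real k - 1) - 2 * (\<lambda>y. (y powr a)) (real k) \<ge> 0"
  proof (rule second_diff_nonneg[where f' = "\<lambda>y. (a * y powr (a-1))" and f'' = "\<lambda>y. (a * ((a-1) * y powr (a-1-1)))"])
    fix y assume y: "real k - 1 \<le> y" "y \<le> real k + 1"
    then have yp: "y > 0" using assms by linarith
    show "((\<lambda>y. (y powr a)) has_real_derivative (a * y powr (a-1))) (at y)"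
      using yp by (intro derivative_intros has_real_derivative_powr)
    show "((\<lambda>y. (a * y powr (a-1))) has_real_derivative (a * ((a-1) * y powr (a-1-1)))) (at y)"
      using DERIV_cmult[OF has_real_derivative_powr[OF yp, of "a-1"], of a] by simp
    show "0 \<le> (a * ((a-1) * y powr (a-1-1)))"
      using assms by simp
  qed
  then show ?thesis by (simp add: dd_def)
qed

lemma phi_derivs:
  fixes y a K :: real assumes yp: "y > 0"
  shows "((\<lambda>y. y powr a * ln y + K * (y*y)/2) has_real_derivative (y powr (a-1) * (a * ln y + 1) + K * y)) (at y)"
    and "((\<lambda>y. y powr (a-1) * (a * ln y + 1) + K * y) has_real_derivative
           (y powr (a-2) * (a*(a-1)*ln y + 2*a - 1) + K)) (at y)"
proof -
  have e1: "y powr a * inverse y = y powr (a-1)" using yp by (simp add: powr_diff divide_inverse)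
  have e2: "y powr (a-1) * inverse y = y powr (a-2)" using yp
  proof -
    have "y powr (a-2) = y powr (a-1) / y powr 1" using powr_diff[of y "a-1" 1] by simp
    then show ?thesis using yp by (simp add: divide_inverse)
  qed
  have q: "((\<lambda>y. K*(y*y)/2) has_real_derivative K*y) (at y)"
    by (auto intro!: derivative_eq_intros)
  show "((\<lambda>y. y powr a * ln y + K * (y*y)/2) has_real_derivative (y powr (a-1) * (a * ln y + 1) + K * y)) (at y)"
    apply (rule DERIV_cong[OF DERIV_add[OF DERIV_mult[OF has_real_derivative_powr[OF yp, of a] DERIV_ln[OF yp]] q]])
    using e1 by (simp add: algebra_simps)
  have q2: "((\<lambda>y. a * ln y + 1) has_real_derivative a * inverse y) (at y)"
    using yp by (auto intro!: derivative_eq_intros simp: divide_inverse)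
  have q3: "((\<lambda>y. K*y) has_real_derivative K) (at y)"
    by (auto intro!: derivative_eq_intros)
  have e3: "y powr (a-1-1) = y powr (a-2)" by simp
  show "((\<lambda>y. y powr (a-1) * (a * ln y + 1) + K * y) has_real_derivative
           (y powr (a-2) * (a*(a-1)*ln y + 2*a - 1) + K)) (at y)"
    apply (rule DERIV_cong[OF DERIV_add[OF DERIV_mult[OF has_real_derivative_powr[OF yp, of "a-1"] q2] q3]])
    using e2 e3 by (simp add: algebra_simps)
qed


lemma phi2_bound:
  fixes y a :: real assumes y: "1 \<le> y" and a: "0 \<le> a" "a \<le> 1"
  shows "y powr (a-2) * (a*(a-1)*ln y + 2*a - 1) + KK a \<ge> 0"
proof -
  define P where "P = y powr (a-2)"
  have P0: "P > 0" unfolding P_def using y by simp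
  have P1: "P \<le> 1" unfolding P_def using powr_mono[of "a-2" 0 y] y a by simp
  have Pinv: "P \<le> inverse y" unfolding P_def using powr_mono[of "a-2" "-1" y] y a
    by (simp add: powr_minus)
  have lny: "0 \<le> ln y" using y by simp
  have "P * ln y \<le> inverse y * ln y" using Pinv lny by (rule mult_right_mono)
  also have "\<dots> \<le> 1/2" using ln_le_half[of y] y by (simp add: field_simps)
  finally have Pl: "P * ln y \<le> 1/2" .
  have Pl0: "0 \<le> P * ln y" using P0 lny by simp
  have aa: "0 \<le> a*(1-a)" using a by simp
  have t1: "a*(a-1)*(P * ln y) \<ge> - (a*(1-a))/2"
  proof -
    have "a*(1-a)*(P * ln y) \<le> a*(1-a)*(1/2)" using Pl aa by (rule mult_left_mono)
    moreover have "a*(a-1)*(P * ln y) = - (a*(1-a)*(P * ln y))" by (simp add: algebra_simps)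
    ultimately show ?thesis by linarith
  qed
  have t2: "P*(2*a-1) \<ge> - max 0 (1-2*a)"
  proof (cases "2*a - 1 \<ge> 0")
    case True then show ?thesis using P0 by simp
  next
    case False
    have "P*(1-2*a) \<le> 1*(1-2*a)" using P1 False by (intro mult_right_mono) auto
    then show ?thesis by (simp add: algebra_simps)
  qed
  have "P * (a*(a-1)*ln y + 2*a - 1) = a*(a-1)*(P * ln y) + P*(2*a-1)" by (simp add: algebra_simps)
  then show ?thesis using t1 t2 unfolding P_def[symmetric] KK_def by linarith
qed

lemma ddp_ge: assumes "k \<ge> 2" "0 \<le> a" "a \<le> 1" shows "ddp k a \<ge> - KK a"
proof -
  let ?f = "\<lambda>y. y powr a * ln y + KK a * (y*y)/2"
  have "?f (real k + 1) + ?f (real k - 1) - 2 * ?f (real k) \<ge> 0"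
  proof (rule second_diff_nonneg[where f' = "\<lambda>y. y powr (a-1) * (a * ln y + 1) + KK a * y"
        and f'' = "\<lambda>y. y powr (a-2) * (a*(a-1)*ln y + 2*a - 1) + KK a"])
    fix y assume y: "real k - 1 \<le> y" "y \<le> real k + 1"
    then have y1: "1 \<le> y" using assms by linarith
    then have yp: "y > 0" by linarith
    show "(?f has_real_derivative y powr (a-1) * (a * ln y + 1) + KK a * y) (at y)"
      by (rule phi_derivs(1)[OF yp])
    show "((\<lambda>y. y powr (a-1) * (a * ln y + 1) + KK a * y) has_real_derivative
           y powr (a-2) * (a*(a-1)*ln y + 2*a - 1) + KK a) (at y)"
      by (rule phi_derivs(2)[OF yp])
    show "0 \<le> y powr (a-2) * (a*(a-1)*ln y + 2*a - 1) + KK a"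
      using phi2_bound[OF y1 assms(2,3)] .
  qed
  moreover have "KK a * ((real k+1)*(real k+1))/2 + KK a*((real k-1)*(real k-1))/2 - 2*(KK a*(real k*real k)/2) = KK a"
    by (simp add: divide_simps) (simp add: algebra_simps)
  ultimately show ?thesis unfolding ddp_def by (simp add: algebra_simps)
qed

lemma phi2_nonneg:
  fixes y a :: real assumes y: "1 \<le> y" and a: "1 \<le> a"
  shows "y powr (a-2) * (a*(a-1)*ln y + 2*a - 1) \<ge> 0"
proof -
  have "0 \<le> a*(a-1)*ln y" using y a by simp
  then have "0 \<le> a*(a-1)*ln y + 2*a - 1" using a by linarith
  then show ?thesis using y by simp
qed

lemma ddp_ge0: assumes "k \<ge> 2" "1 \<le> a" shows "ddp k a \<ge> 0"
proof -
  let ?f = "\<lambda>y. y powr a * ln y + 0 * (y*y)/2"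
  have "?f (real k + 1) + ?f (real k - 1) - 2 * ?f (real k) \<ge> 0"
  proof (rule second_diff_nonneg[where f' = "\<lambda>y. y powr (a-1) * (a * ln y + 1) + 0 * y"
        and f'' = "\<lambda>y. y powr (a-2) * (a*(a-1)*ln y + 2*a - 1) + 0"])
    fix y assume y: "real k - 1 \<le> y" "y \<le> real k + 1"
    then have y1: "1 \<le> y" using assms by linarith
    then have yp: "y > 0" by linarith
    show "(?f has_real_derivative y powr (a-1) * (a * ln y + 1) + 0 * y) (at y)"
      by (rule phi_derivs(1)[OF yp])
    show "((\<lambda>y. y powr (a-1) * (a * ln y + 1) + 0 * y) has_real_derivative
           y powr (a-2) * (a*(a-1)*ln y + 2*a - 1) + 0) (at y)"
      by (rule phi_derivs(2)[OF yp])
    show "0 \<le> y powr (a-2) * (a*(a-1)*ln y + 2*a - 1) + 0"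
      using phi2_nonneg[OF y1 assms(2)] by simp
  qed
  then show ?thesis by (simp add: ddp_def algebra_simps)
qed

lemma dd_deriv: assumes "k \<ge> 2" shows "(dd k has_real_derivative ddp k a) (at a)"
proof -
  have p: "real k - 1 > 0" "real k + 1 > 0" "real k > 0" using assms by auto
  show ?thesis unfolding dd_def[abs_def] ddp_def
    by (rule DERIV_cong, (rule derivative_intros has_real_derivative_const_powr DERIV_ident)+)
       (simp add: algebra_simps)
qed

lemma dd_tele: "(\<Sum>k=2..Suc n. dd k a) = (real n + 2) powr a - (real n + 1) powr a - 2 powr a + 1"
proof (induction n)
  case 0 then show ?case by simp
next
  case (Suc n)
  have e: "real (Suc (Suc n)) - 1 = real n + 1" "real (Suc (Suc n)) + 1 = real n + 3"
          "real (Suc (Suc n)) = real n + 2" by auto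
  show ?case using Suc by (simp add: dd_def e algebra_simps)
qed

lemma weighted_step:
  fixes h :: "nat \<Rightarrow> real"
  shows "(\<Sum>k=2..Suc N. real (Suc N - k + 1) * h k) = (\<Sum>k=2..N. real (N - k + 1) * h k) + (\<Sum>k=2..Suc N. h k)"
proof (cases "N = 0")
  case True then show ?thesis by simp
next
  case False
  have "(\<Sum>k=2..N. real (Suc N - k + 1) * h k) = (\<Sum>k=2..N. real (N - k + 1) * h k + h k)"
    by (rule sum.cong) (auto simp: Suc_diff_le algebra_simps)
  then show ?thesis using False by (simp add: sum.distrib)
qed

lemma S2_id: "(\<Sum>k=2..N. real (N - k + 1) * dd k a) + real N * (2 powr a - 2) = (real N + 1) powr a - (real N + 1)"
proof (induction N)
  case 0 then show ?case by simp
next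
  case (Suc N)
  have "(\<Sum>k=2..Suc N. real (Suc N - k + 1) * dd k a) + real (Suc N) * (2 powr a - 2)
     = ((\<Sum>k=2..N. real (N - k + 1) * dd k a) + real N * (2 powr a - 2)) + (\<Sum>k=2..Suc N. dd k a) + (2 powr a - 2)"
    by (simp only: weighted_step of_nat_Suc distrib_right mult_1_left)
  also have "\<dots> = (real N + 1) powr a - (real N + 1) + ((real N + 2) powr a - (real N + 1) powr a - 2 powr a + 1) + (2 powr a - 2)"
    using Suc dd_tele[where n=N and a=a] by simp
  finally show ?case by (simp add: algebra_simps)
qed


definition FA :: "nat \<Rightarrow> real \<Rightarrow> real" where
  "FA N a = (\<Sum>k=2..N. (dd k a)^2) + (2 powr a - 2)^2"

definition FAd :: "nat \<Rightarrow> real \<Rightarrow> real" where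
  "FAd N a = (\<Sum>k=2..N. 2 * dd k a * ddp k a) + 2 * (2 powr a - 2) * (ln 2 * 2 powr a)"

definition pp :: "real \<Rightarrow> real" where "pp a = (1-a)^2/(2-a)"
definition ppd :: "real \<Rightarrow> real" where "ppd a = -((1-a)*(3-a))/(2-a)^2"

lemma FA_deriv: "(FA N has_real_derivative FAd N a) (at a)"
proof -
  have t: "((\<lambda>a. (dd k a)^2) has_real_derivative 2 * dd k a * ddp k a) (at a)" if "k \<in> {2..N}" for k
    using that by (intro DERIV_cong[OF DERIV_power[OF dd_deriv]]) auto
  have u: "((\<lambda>a. (2 powr a - 2)^2) has_real_derivative 2 * (2 powr a - 2) * (ln 2 * 2 powr a)) (at a)"
    by (rule DERIV_cong, (rule derivative_intros has_real_derivative_const_powr DERIV_ident)+) auto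
  show ?thesis unfolding FA_def[abs_def] FAd_def
    by (intro DERIV_add DERIV_sum t u)
qed

lemma pp_deriv: assumes "a < 2" shows "(pp has_real_derivative ppd a) (at a)"
  unfolding pp_def[abs_def] ppd_def
  using assms
  by (auto intro!: derivative_eq_intros simp: field_simps power2_eq_square)

lemma F1_eq: "F1 N H = FA N (2*H)"
  by (simp add: F1_def FA_def d2_def dd_def)

lemma coef_eq: "(H - 1/2)^2 / (1 - H) = pp (2*H) / 2"
proof (cases "H = 1")
  case True then show ?thesis by (simp add: pp_def)
next
  case False
  then have "1 - H \<noteq> 0" "2 - 2*H \<noteq> 0" by auto
  then show ?thesis unfolding pp_def by (simp add: field_simps power2_eq_square)
qed

lemma E1_eq: "E1 N H = - (pp (2*H) * FA N (2*H)) / 2"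
  by (simp add: E1_def coef_eq F1_eq)

lemma pow_facts: assumes "0 \<le> a" "a \<le> 1" shows "1 \<le> (2::real) powr a" "(2::real) powr a \<le> 1 + a"
  using assms two_powr_le ge_one_powr_ge_zero[of 2 a] by auto

lemma poly_key:
  fixes a t K :: real
  assumes a: "0 < a" "a < 1" and t: "1 \<le> t" "t \<le> 1 + a"
    and K: "K = KK a"
  shows "2*(1-a)*(2-a)*K*(t-1) < (3-a)*(2-t)^2"
proof -
  have K0: "0 \<le> K" unfolding K KK_def using a by auto
  have sq: "(1-a)^2 \<le> (2-t)^2" using a t by (intro power_mono) auto
  have c0: "0 \<le> 2*(1-a)*(2-a)" using a by auto
  show ?thesis
  proof (cases "a \<le> 1/2")
    case True
    have Kb: "K \<le> 1 - 3*a/2" unfolding K KK_def using True a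
      by (auto simp: max_def algebra_simps)
    have "K*(t-1) \<le> (1 - 3*a/2) * a" using Kb t K0 True by (intro mult_mono) auto
    then have "2*(1-a)*(2-a)*(K*(t-1)) \<le> 2*(1-a)*(2-a)*((1 - 3*a/2) * a)"
      using c0 by (rule mult_left_mono)
    moreover have "2*(1-a)*(2-a)*((1 - 3*a/2) * a) < (3-a)*(1-a)^2"
    proof -
      have a3: "a^3 \<le> a^2/2" using True a
        by (auto simp: power2_eq_square power3_eq_cube intro: mult_left_mono[of a "1/2" "a*a", simplified])
      have sq2: "0 \<le> (15/2)*(a - 8/15)^2" by simp
      have inner: "3 - 8*a + 9*a^2 - 3*a^3 > 0"
        using a3 sq2 by (simp add: power2_eq_square algebra_simps)
      have "(3-a)*(1-a)^2 - 2*(1-a)*(2-a)*((1 - 3*a/2) * a) = (1-a)*(3 - 8*a + 9*a^2 - 3*a^3)"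
        by (simp add: algebra_simps power2_eq_square power3_eq_cube)
      moreover have "(1-a)*(3 - 8*a + 9*a^2 - 3*a^3) > 0" using inner a by simp
      ultimately show ?thesis by linarith
    qed
    moreover have "(3-a)*(1-a)^2 \<le> (3-a)*(2-t)^2" using sq a by (intro mult_left_mono) auto
    ultimately show ?thesis by (simp add: algebra_simps)
  next
    case False
    then have Kb: "K = a*(1-a)/2" unfolding K KK_def by (auto simp: max_def)
    have "a*(t-1) \<le> 1*1" using a t by (intro mult_mono) auto
    have "2*(1-a)*(2-a)*K*(t-1) = (1-a)^2*(2-a)*(a*(t-1))" unfolding Kb
      by (simp add: field_simps power2_eq_square)
    also have "\<dots> \<le> (1-a)^2*(2-a)*1" using \<open>a*(t-1) \<le> 1*1\<close> a by (intro mult_left_mono) auto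
    also have "\<dots> = (1-a)^2*(2-a)" by simp
    also have "\<dots> < (1-a)^2*(3-a)"
    proof -
      have "(1-a)^2 > 0" using a by simp
      then show ?thesis by (intro mult_strict_left_mono) auto
    qed
    also have "\<dots> \<le> (3-a)*(2-t)^2" using sq a by (simp add: mult.commute mult_left_mono)
    finally show ?thesis .
  qed
qed

lemma key_ineq:
  assumes N: "N \<ge> 1" and a: "0 < a" "a < 1"
  shows "(1-a)*(2-a)*FAd N a < (3-a)*FA N a"
proof -
  obtain n where n: "N = Suc n" using N by (cases N) auto
  have t: "1 \<le> (2::real) powr a" "(2::real) powr a \<le> 1 + a" using pow_facts a by auto
  have K0: "0 \<le> KK a" unfolding KK_def using a by auto
  have tm: "dd k a * ddp k a \<le> (- dd k a) * KK a" if "k \<in> {2..N}" for k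
  proof -
    have h1: "- dd k a \<ge> 0" using dd_le0[of k a] that a by auto
    have h2: "- ddp k a \<le> KK a" using ddp_ge[of k a] that a by auto
    have "(- dd k a) * (- ddp k a) \<le> (- dd k a) * KK a" by (rule mult_left_mono[OF h2 h1])
    then show ?thesis by simp
  qed
  have "(\<Sum>k=2..N. dd k a * ddp k a) \<le> (\<Sum>k=2..N. (- dd k a) * KK a)"
    using tm by (rule sum_mono)
  also have "\<dots> = - (\<Sum>k=2..N. dd k a) * KK a" by (simp add: sum_distrib_right sum_negf)
  also have "\<dots> = (2 powr a - 1 - ((real n + 2) powr a - (real n + 1) powr a)) * KK a"
    unfolding n dd_tele by (simp add: algebra_simps)
  also have "\<dots> \<le> (2 powr a - 1) * KK a"
  proof -
    have "(real n + 1) powr a \<le> (real n + 2) powr a" using a by (intro powr_mono2) auto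
    then show ?thesis using K0 by (intro mult_right_mono) auto
  qed
  finally have S: "(\<Sum>k=2..N. dd k a * ddp k a) \<le> (2 powr a - 1) * KK a" .
  have T: "(2 powr a - 2) * (ln 2 * 2 powr a) \<le> 0"
    using t a by (intro mult_nonpos_nonneg) auto
  have "FAd N a = 2 * (\<Sum>k=2..N. dd k a * ddp k a) + 2 * ((2 powr a - 2) * (ln 2 * 2 powr a))"
    unfolding FAd_def by (simp add: sum_distrib_left algebra_simps)
  also have "\<dots> \<le> 2 * ((2 powr a - 1) * KK a)" using S T by linarith
  finally have "FAd N a \<le> 2 * ((2 powr a - 1) * KK a)" .
  then have "(1-a)*(2-a)*FAd N a \<le> (1-a)*(2-a)*(2 * ((2 powr a - 1) * KK a))"
    using a by (intro mult_left_mono) auto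
  also have "\<dots> = 2*(1-a)*(2-a)*KK a*(2 powr a - 1)" by (simp add: algebra_simps)
  also have "\<dots> < (3-a)*(2 - 2 powr a)^2" using poly_key[OF a t refl] .
  also have "\<dots> \<le> (3-a)*FA N a"
  proof -
    have "(2 - 2 powr a)^2 \<le> FA N a" unfolding FA_def
      by (simp add: sum_nonneg power2_commute)
    then show ?thesis using a by (intro mult_left_mono) auto
  qed
  finally show ?thesis .
qed

lemma Q_dec:
  assumes N: "N \<ge> 1" and a: "0 \<le> a1" "a1 < a2" "a2 \<le> 1"
  shows "pp a2 * FA N a2 < pp a1 * FA N a1"
proof (rule DERIV_neg_imp_decreasing_open[where f = "\<lambda>a. pp a * FA N a"])
  show "a1 < a2" by fact
  have D: "((\<lambda>a. pp a * FA N a) has_real_derivative ppd x * FA N x + pp x * FAd N x) (at x)" if "x < 2" for x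
    using DERIV_mult'[OF pp_deriv[OF that] FA_deriv, of N] by (simp add: algebra_simps)
  show "continuous_on {a1..a2} (\<lambda>a. pp a * FA N a)"
    using D a by (intro DERIV_atLeastAtMost_imp_continuous_on) force
  fix x assume x: "a1 < x" "x < a2"
  then have x01: "0 < x" "x < 1" using a by auto
  have neq: "2 - x \<noteq> 0" using x01 by simp
  define c where "c = (1-x)/(2-x)^2"
  have e1: "ppd x = c * (-(3-x))" unfolding ppd_def c_def using neq by (simp add: field_simps)
  have e2: "pp x = c * ((1-x)*(2-x))" unfolding pp_def c_def using neq
    by (simp add: power2_eq_square)
  have "ppd x * FA N x + pp x * FAd N x = c * ((1-x)*(2-x)*FAd N x - (3-x)*FA N x)"
    unfolding e1 e2 by (simp add: algebra_simps)
  moreover have "c * ((1-x)*(2-x)*FAd N x - (3-x)*FA N x) < 0"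
    unfolding c_def using key_ineq[OF N x01] x01 by (intro mult_pos_neg) auto
  ultimately show "\<exists>y. ((\<lambda>a. pp a * FA N a) has_real_derivative y) (at x) \<and> y < 0"
    using D[of x] x01 by auto
qed


lemma pp_dec: assumes "0 \<le> a1" "a1 < a2" "a2 \<le> 1" shows "pp a2 < pp a1"
proof (rule DERIV_neg_imp_decreasing_open[where f = pp])
  show "a1 < a2" by fact
  show "continuous_on {a1..a2} pp"
    using assms by (intro DERIV_atLeastAtMost_imp_continuous_on) (force intro: pp_deriv)
  fix x assume x: "a1 < x" "x < a2"
  then have "ppd x < 0" using assms unfolding ppd_def by (auto intro!: divide_pos_pos mult_pos_pos)
  then show "\<exists>y. (pp has_real_derivative y) (at x) \<and> y < 0" using pp_deriv[of x] x assms by auto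
qed

lemma pp_inc: assumes "1 \<le> a1" "a1 < a2" "a2 < 2" shows "pp a1 < pp a2"
proof -
  have "pp a1 = (a1-1)^2/(2-a1)" unfolding pp_def by (simp add: power2_commute)
  also have "\<dots> \<le> (a1-1)^2/(2-a2)" using assms by (intro divide_left_mono) auto
  also have "\<dots> < (a2-1)^2/(2-a2)" using assms by (intro divide_strict_right_mono power_strict_mono) auto
  also have "\<dots> = pp a2" unfolding pp_def by (simp add: power2_commute)
  finally show ?thesis .
qed

lemma pp_nonneg: "a < 2 \<Longrightarrow> 0 \<le> pp a" unfolding pp_def by simp

lemma dd_mono: assumes "k \<ge> 2" "1 \<le> a1" "a1 \<le> a2" shows "dd k a1 \<le> dd k a2"
  by (rule DERIV_nonneg_imp_nondecreasing[of a1 a2 "dd k"])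
     (use assms dd_deriv ddp_ge0 in fastforce)+

lemma Q_inc:
  assumes a: "1 \<le> a1" "a1 < a2" "a2 < 2"
  shows "pp a1 * FA N a1 < pp a2 * FA N a2"
proof -
  have p1: "2 \<le> (2::real) powr a1" using powr_mono[of 1 a1 2] a by simp
  have p12: "(2::real) powr a1 \<le> 2 powr a2" using powr_mono[of a1 a2 2] a by simp
  have p2: "2 < (2::real) powr a2" using powr_less_mono[of 1 a2 2] a by simp
  have "FA N a1 \<le> FA N a2" unfolding FA_def
  proof (intro add_mono sum_mono power_mono)
    fix k assume k: "k \<in> {2..N}"
    show "dd k a1 \<le> dd k a2" using dd_mono[of k a1 a2] k a by auto
    show "0 \<le> dd k a1" using dd_ge0[of k a1] k a by auto
  qed (use p1 p12 in auto)
  moreover have FA2: "0 < FA N a2"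
  proof -
    have "0 < (2 powr a2 - 2)^2" using p2 by simp
    moreover have "0 \<le> (\<Sum>k=2..N. (dd k a2)^2)" by (simp add: sum_nonneg)
    ultimately show ?thesis unfolding FA_def by linarith
  qed
  ultimately have "pp a1 * FA N a1 \<le> pp a1 * FA N a2" using pp_nonneg[of a1] a
    by (intro mult_left_mono) auto
  also have "\<dots> < pp a2 * FA N a2" using pp_inc[OF a] FA2 by (intro mult_strict_right_mono)
  finally show ?thesis .
qed

lemma F2_eq: "F2 N H = (\<Sum>k=2..N. real (N - k + 1) * \<bar>dd k (2*H)\<bar>) + real N * \<bar>2 powr (2*H) - 2\<bar>"
  by (simp add: F2_def d2_def dd_def)

lemma F2_lo: assumes "0 \<le> a" "a \<le> 1"
  shows "(\<Sum>k=2..N. real (N - k + 1) * \<bar>dd k a\<bar>) + real N * \<bar>2 powr a - 2\<bar> = (real N + 1) - (real N + 1) powr a"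
proof -
  have A: "(\<Sum>k=2..N. real (N - k + 1) * \<bar>dd k a\<bar>) = (\<Sum>k=2..N. - (real (N - k + 1) * dd k a))"
    by (rule sum.cong) (use dd_le0 assms in auto)
  have s: "(\<Sum>k=2..N. - (real (N - k + 1) * dd k a)) = - (\<Sum>k=2..N. real (N - k + 1) * dd k a)"
    by (rule sum_negf)
  have B: "\<bar>2 powr a - 2\<bar> = - (2 powr a - 2)"
    using powr_mono[of a 1 2] assms by simp
  have "(\<Sum>k=2..N. real (N - k + 1) * \<bar>dd k a\<bar>) + real N * \<bar>2 powr a - 2\<bar>
      = - (\<Sum>k=2..N. real (N - k + 1) * dd k a) + - (real N * (2 powr a - 2))"
    by (simp only: A s B mult_minus_right)
  then show ?thesis using S2_id[of N a] by linarith
qed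

lemma F2_hi: assumes "1 \<le> a"
  shows "(\<Sum>k=2..N. real (N - k + 1) * \<bar>dd k a\<bar>) + real N * \<bar>2 powr a - 2\<bar> = (real N + 1) powr a - (real N + 1)"
proof -
  have "(\<Sum>k=2..N. real (N - k + 1) * \<bar>dd k a\<bar>) = (\<Sum>k=2..N. (real (N - k + 1) * dd k a))"
    by (rule sum.cong) (use dd_ge0 assms in auto)
  moreover have "\<bar>2 powr a - 2\<bar> = (2 powr a - 2)"
    using powr_mono[of 1 a 2] assms by simp
  ultimately show ?thesis using S2_id[of N a] by simp
qed

lemma E2_eq: "E2 N H = - (pp (2*H) * F2 N H) / 2"
  by (simp add: E2_def coef_eq)

lemma R_dec:
  assumes N: "N \<ge> 1" and a: "0 \<le> a1" "a1 < a2" "a2 \<le> 1"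
  shows "pp a2 * ((real N + 1) - (real N + 1) powr a2) < pp a1 * ((real N + 1) - (real N + 1) powr a1)"
proof -
  have b: "(1::real) < real N + 1" using N by simp
  have g1: "(real N + 1) powr a1 < (real N + 1) powr 1" using powr_less_mono[of a1 1 "real N + 1"] a b by simp
  have g12: "(real N + 1) powr a1 \<le> (real N + 1) powr a2" using powr_mono[of a1 a2 "real N + 1"] a b by simp
  have g2: "(real N + 1) powr a2 \<le> (real N + 1) powr 1" using powr_mono[of a2 1 "real N + 1"] a b by simp
  have "pp a2 * ((real N + 1) - (real N + 1) powr a2) \<le> pp a2 * ((real N + 1) - (real N + 1) powr a1)"
    using pp_nonneg[of a2] a g12 by (intro mult_left_mono) auto
  also have "\<dots> < pp a1 * ((real N + 1) - (real N + 1) powr a1)"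
    using pp_dec[OF a] g1 by (intro mult_strict_right_mono) auto
  finally show ?thesis .
qed

lemma R_inc:
  assumes N: "N \<ge> 1" and a: "1 \<le> a1" "a1 < a2" "a2 < 2"
  shows "pp a1 * ((real N + 1) powr a1 - (real N + 1)) < pp a2 * ((real N + 1) powr a2 - (real N + 1))"
proof -
  have b: "(1::real) < real N + 1" using N by simp
  have g1: "(real N + 1) powr 1 < (real N + 1) powr a2" using powr_less_mono[of 1 a2 "real N + 1"] a b by simp
  have g12: "(real N + 1) powr a1 \<le> (real N + 1) powr a2" using powr_mono[of a1 a2 "real N + 1"] a b by simp
  have g2: "(real N + 1) powr 1 \<le> (real N + 1) powr a1" using powr_mono[of 1 a1 "real N + 1"] a b by simp
  have "pp a1 * ((real N + 1) powr a1 - (real N + 1)) \<le> pp a1 * ((real N + 1) powr a2 - (real N + 1))"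
    using pp_nonneg[of a1] a g12 g2 by (intro mult_left_mono) auto
  also have "\<dots> < pp a2 * ((real N + 1) powr a2 - (real N + 1))"
    using pp_inc[OF a] g1 by (intro mult_strict_right_mono) auto
  finally show ?thesis .
qed

lemma big_pow: assumes "3/4 \<le> H" shows "(1/2::real) \<le> \<bar>2 powr (2*H) - 2\<bar>"
proof -
  have "(2::real) powr (3/2) \<le> 2 powr (2*H)" using assms by (intro powr_mono) auto
  moreover have "(2::real) powr (3/2) = 2 * sqrt 2"
  proof -
    have "(2::real) powr (3/2) = 2 powr (1 + 1/2)" by simp
    also have "\<dots> = 2 powr 1 * 2 powr (1/2)" by (rule powr_add)
    also have "\<dots> = 2 * sqrt 2" by (simp add: powr_half_sqrt)
    finally show ?thesis .
  qed
  moreover have "5/4 \<le> sqrt (2::real)" by (rule real_le_rsqrt) (simp add: power2_eq_square)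
  ultimately show ?thesis by simp
qed

lemma E1_lim: "filterlim (E1 N) at_bot (at_left 1)"
proof (rule filterlim_at_bot_mono[where u = "\<lambda>H. - (1/64) / (1 - H)"])
  show "filterlim (\<lambda>H::real. - (1/64) / (1 - H)) at_bot (at_left 1)" by real_asymp
  have ev: "eventually (\<lambda>H::real. 3/4 < H \<and> H < 1) (at_left 1)"
    by (rule eventually_mono[OF eventually_at_left_real[of "3/4" 1]]) auto
  show "eventually (\<lambda>H. E1 N H \<le> - (1/64) / (1 - H)) (at_left 1)"
    using ev
  proof eventually_elim
    case (elim H)
    then have h1: "1 - H > 0" by simp
    have c: "1/16 \<le> (H - 1/2)^2"
    proof -
      have "1/4 \<le> H - 1/2" using elim by simp
      then have "(1/4)^2 \<le> (H - 1/2)^2" by (intro power_mono) auto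
      then show ?thesis by (simp add: power2_eq_square)
    qed
    have f: "1/4 \<le> F1 N H"
    proof -
      have "(1/2)^2 \<le> \<bar>2 powr (2*H) - 2\<bar>^2" using big_pow[of H] elim by (intro power_mono) auto
      then have "1/4 \<le> (2 powr (2*H) - 2)^2" by (simp add: power2_eq_square)
      moreover have "0 \<le> (\<Sum>k=2..N. (d2 k H)^2)" by (simp add: sum_nonneg)
      ultimately show ?thesis unfolding F1_def by linarith
    qed
    have "(1/16) * (1/4) \<le> (H - 1/2)^2 * F1 N H" using c f by (intro mult_mono) auto
    then have "(1/64) / (1 - H) \<le> ((H - 1/2)^2 * F1 N H) / (1 - H)"
      using h1 by (intro divide_right_mono) auto
    moreover have "E1 N H = - (((H - 1/2)^2 * F1 N H) / (1 - H))" unfolding E1_def by simp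
    ultimately show ?case by linarith
  qed
qed

lemma E2_lim: assumes "N \<ge> 1" shows "filterlim (E2 N) at_bot (at_left 1)"
proof (rule filterlim_at_bot_mono[where u = "\<lambda>H. - (1/32) / (1 - H)"])
  show "filterlim (\<lambda>H::real. - (1/32) / (1 - H)) at_bot (at_left 1)" by real_asymp
  have ev: "eventually (\<lambda>H::real. 3/4 < H \<and> H < 1) (at_left 1)"
    by (rule eventually_mono[OF eventually_at_left_real[of "3/4" 1]]) auto
  show "eventually (\<lambda>H. E2 N H \<le> - (1/32) / (1 - H)) (at_left 1)"
    using ev
  proof eventually_elim
    case (elim H)
    then have h1: "1 - H > 0" by simp
    have c: "1/16 \<le> (H - 1/2)^2"
    proof -
      have "1/4 \<le> H - 1/2" using elim by simp
      then have "(1/4)^2 \<le> (H - 1/2)^2" by (intro power_mono) auto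
      then show ?thesis by (simp add: power2_eq_square)
    qed
    have f: "1/2 \<le> F2 N H"
    proof -
      have "1/2 \<le> \<bar>2 powr (2*H) - 2\<bar>" using big_pow[of H] elim by auto
      also have "\<dots> = 1 * \<bar>2 powr (2*H) - 2\<bar>" by simp
      also have "\<dots> \<le> real N * \<bar>2 powr (2*H) - 2\<bar>" using assms
        by (intro mult_right_mono) auto
      finally have "1/2 \<le> real N * \<bar>2 powr (2*H) - 2\<bar>" .
      moreover have "0 \<le> (\<Sum>k=2..N. real (N - k + 1) * \<bar>d2 k H\<bar>)"
        by (intro sum_nonneg mult_nonneg_nonneg) auto
      ultimately show ?thesis unfolding F2_def by linarith
    qed
    have "(1/16) * (1/2) \<le> (H - 1/2)^2 * F2 N H" using c f by (intro mult_mono) auto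
    then have "(1/32) / (1 - H) \<le> ((H - 1/2)^2 * F2 N H) / (1 - H)"
      using h1 by (intro divide_right_mono) auto
    moreover have "E2 N H = - (((H - 1/2)^2 * F2 N H) / (1 - H))" unfolding E2_def by simp
    ultimately show ?case by linarith
  qed
qed


lemma E2_lo: assumes "0 \<le> H" "H \<le> 1/2"
  shows "E2 N H = - (pp (2*H) * ((real N + 1) - (real N + 1) powr (2*H))) / 2"
  using F2_lo[of "2*H" N] assms by (simp add: E2_eq F2_eq)

lemma E2_hi: assumes "1/2 \<le> H"
  shows "E2 N H = - (pp (2*H) * ((real N + 1) powr (2*H) - (real N + 1))) / 2"
  using F2_hi[of "2*H" N] assms by (simp add: E2_eq F2_eq)

theorem mainTheorem6:
  fixes N :: nat
  assumes "N \<ge> 2"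
  shows "(\<forall>H1 H2. 0 \<le> H1 \<and> H1 < H2 \<and> H2 \<le> 1/2 \<longrightarrow> E1 N H1 < E1 N H2)
       \<and> (\<forall>H1 H2. 1/2 \<le> H1 \<and> H1 < H2 \<and> H2 < 1 \<longrightarrow> E1 N H2 < E1 N H1)
       \<and> E1 N 0 = - 1/4 \<and> E1 N (1/2) = 0
       \<and> filterlim (E1 N) at_bot (at_left 1)
       \<and> (\<forall>H1 H2. 0 \<le> H1 \<and> H1 < H2 \<and> H2 \<le> 1/2 \<longrightarrow> E2 N H1 < E2 N H2)
       \<and> (\<forall>H1 H2. 1/2 \<le> H1 \<and> H1 < H2 \<and> H2 < 1 \<longrightarrow> E2 N H2 < E2 N H1)
       \<and> E2 N 0 = - real N / 4 \<and> E2 N (1/2) = 0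
       \<and> filterlim (E2 N) at_bot (at_left 1)"
proof (intro conjI allI impI)
  have N1: "N \<ge> 1" using assms by simp
  show "filterlim (E1 N) at_bot (at_left 1)" by (rule E1_lim)
  show "filterlim (E2 N) at_bot (at_left 1)" by (rule E2_lim[OF N1])
  show "E1 N (1/2) = 0" by (simp add: E1_def)
  show "E2 N (1/2) = 0" by (simp add: E2_def)
  fix H1 H2 :: real
  {
    assume h: "0 \<le> H1 \<and> H1 < H2 \<and> H2 \<le> 1/2"
    have "pp (2*H2) * FA N (2*H2) < pp (2*H1) * FA N (2*H1)"
      using Q_dec[OF N1, of "2*H1" "2*H2"] h by auto
    then show "E1 N H1 < E1 N H2" by (simp add: E1_eq)
  }
  {
    assume h: "1/2 \<le> H1 \<and> H1 < H2 \<and> H2 < 1"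
    have "pp (2*H1) * FA N (2*H1) < pp (2*H2) * FA N (2*H2)"
      using Q_inc[of "2*H1" "2*H2" N] h by auto
    then show "E1 N H2 < E1 N H1" by (simp add: E1_eq)
  }
  {
    assume h: "0 \<le> H1 \<and> H1 < H2 \<and> H2 \<le> 1/2"
    have "pp (2*H2) * ((real N + 1) - (real N + 1) powr (2*H2)) < pp (2*H1) * ((real N + 1) - (real N + 1) powr (2*H1))"
      using R_dec[OF N1, of "2*H1" "2*H2"] h by auto
    then show "E2 N H1 < E2 N H2" using E2_lo[of H1 N] E2_lo[of H2 N] h by simp
  }
  {
    assume h: "1/2 \<le> H1 \<and> H1 < H2 \<and> H2 < 1"
    have "pp (2*H1) * ((real N + 1) powr (2*H1) - (real N + 1)) < pp (2*H2) * ((real N + 1) powr (2*H2) - (real N + 1))"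
      using R_inc[OF N1, of "2*H1" "2*H2"] h by auto
    then show "E2 N H2 < E2 N H1" using E2_hi[of H1 N] E2_hi[of H2 N] h by simp
  }
  have d0: "d2 k 0 = 0" if "k \<in> {2..N}" for k
    using that by (simp add: d2_def)
  have "F1 N 0 = 1" unfolding F1_def using d0 by simp
  then show "E1 N 0 = - 1/4" by (simp add: E1_def power2_eq_square)
  have "E2 N 0 = - (pp 0 * ((real N + 1) - (real N + 1) powr 0)) / 2" using E2_lo[of 0 N] by simp
  then show "E2 N 0 = - real N / 4" by (simp add: pp_def)
qed

end
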